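(* Let $n\ge 4$ and let $H$ be obtained from the cycle $C_n$ by attaching a single new pendant vertex (leaf) to each of two vertices of $C_n$ whose distance in $C_n$ is $2k+1$ for some integer $k\ge 0$. Then $\chi_\rho(H)\ge 4$.
   Context: $d(u,v)$ is the shortest-path distance. A $k$-packing coloring of $G$ is a map $c:V(G)\to\{1,\dots,k\}$ such that whenever $u\neq v$ and $c(u)=c(v)=i$, we have $d(u,v)>i$. $\chi_\rho(G)$ is the least $k$ such that $G$ has a $k$-packing coloring. *)

theory Defs
  imports Main
begin

text \<open>Simple graphs given by a vertex set V and a symmetric adjacency relation E.\<close>

definition walk :: "('a \<Rightarrow> 'a \<Rightarrow> bool) \<Rightarrow> 'a list \<Rightarrow> bool" where
  "walk E xs \<longleftrightarrow> xs \<noteq> [] \<and> (\<forall>i. Suc i < length xs \<longrightarrow> E (xs ! i) (xs ! Suc i))"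

text \<open>Shortest-path distance d(u,v): least number of edges of a walk from u to v
  (only meaningful for connected pairs).\<close>
definition gdist :: "('a \<Rightarrow> 'a \<Rightarrow> bool) \<Rightarrow> 'a \<Rightarrow> 'a \<Rightarrow> nat" where
  "gdist E u v = (LEAST m. \<exists>xs. walk E xs \<and> hd xs = u \<and> last xs = v \<and> length xs = Suc m)"

definition packing_coloring ::
  "'a set \<Rightarrow> ('a \<Rightarrow> 'a \<Rightarrow> bool) \<Rightarrow> nat \<Rightarrow> ('a \<Rightarrow> nat) \<Rightarrow> bool" where
  "packing_coloring V E k c \<longleftrightarrow>
     (\<forall>v\<in>V. c v \<in> {1..k}) \<and>
     (\<forall>u\<in>V. \<forall>v\<in>V. u \<noteq> v \<and> c u = c v \<longrightarrow> gdist E u v > c u)"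

definition packing_chromatic :: "'a set \<Rightarrow> ('a \<Rightarrow> 'a \<Rightarrow> bool) \<Rightarrow> nat" where
  "packing_chromatic V E = (LEAST k. \<exists>c. packing_coloring V E k c)"

definition cycle_adj :: "nat \<Rightarrow> nat \<Rightarrow> nat \<Rightarrow> bool" where
  "cycle_adj n u v \<longleftrightarrow> u < n \<and> v < n \<and> (v = (u + 1) mod n \<or> u = (v + 1) mod n)"

definition two_pendant_adj :: "nat \<Rightarrow> nat \<Rightarrow> nat \<Rightarrow> nat \<Rightarrow> nat \<Rightarrow> bool" where
  "two_pendant_adj n a b u v \<longleftrightarrow>
     cycle_adj n u v \<or> {u, v} = {a, n} \<or> {u, v} = {b, n + 1}"

end

theory Submission
  imports Defs
begin

lemma walk_mono: "walk E xs \<Longrightarrow> (\<And>u v. E u v \<Longrightarrow> F u v) \<Longrightarrow> walk F xs"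
  unfolding walk_def by blast

lemma gdist_le: "walk E xs \<Longrightarrow> hd xs = u \<Longrightarrow> last xs = v \<Longrightarrow> length xs = Suc m
  \<Longrightarrow> gdist E u v \<le> m"
  unfolding gdist_def by (rule Least_le) blast

lemma pc_conf: "packing_coloring V E k c \<Longrightarrow> u\<in>V \<Longrightarrow> v\<in>V \<Longrightarrow> u\<noteq>v
  \<Longrightarrow> gdist E u v \<le> m \<Longrightarrow> c u = c v \<Longrightarrow> c u < m"
  unfolding packing_coloring_def by fastforce

lemma cyc_walk:
  assumes "n > 0"
  shows "walk (cycle_adj n) (map (\<lambda>j. (x+j) mod n) [0..<Suc d])"
  unfolding walk_def cycle_adj_def using assms
  by (auto simp: nth_map mod_Suc_eq simp del: upt_Suc)

lemma cyc_seg: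
  assumes "n > 0"
  shows "\<exists>xs. walk (cycle_adj n) xs \<and> hd xs = x mod n \<and> last xs = (x+d) mod n \<and> length xs = Suc d"
proof -
  let ?xs = "map (\<lambda>j. (x+j) mod n) [0..<Suc d]"
  have "hd ?xs = x mod n" by (simp add: hd_map del: upt_Suc)
  moreover have "last ?xs = (x+d) mod n" by (simp add: last_map del: upt_Suc)
  ultimately show ?thesis using cyc_walk[OF assms] by (intro exI[of _ ?xs]) simp
qed

lemma mod_ne: "0 < d \<Longrightarrow> d < (n::nat) \<Longrightarrow> x mod n \<noteq> (x + d) mod n"
proof
  assume a: "0 < d" "d < n" "x mod n = (x + d) mod n"
  then have "n dvd (x + d) - x" using mod_eq_dvd_iff_nat[of x "x+d" n] by simp
  then have "n dvd d" by simp
  then show False using a by (auto dest: dvd_imp_le)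
qed

lemma cyc_parity:
  assumes "even n" "walk (cycle_adj n) xs"
  shows "i < length xs \<Longrightarrow> even (xs!0 + xs!i + i)"
proof (induction i)
  case 0 then show ?case by simp
next
  case (Suc i)
  have e: "cycle_adj n (xs!i) (xs!Suc i)" using assms(2) Suc.prems unfolding walk_def by blast
  have "odd (xs!i + xs!Suc i)"
  proof -
    have key: "\<And>u v. u < n \<Longrightarrow> v = (u+1) mod n \<Longrightarrow> odd (u + v)"
    proof -
      fix u v assume "u < n" "v = (u+1) mod n"
      show "odd (u+v)"
      proof (cases "u + 1 < n")
        case True then show ?thesis using \<open>v = _\<close> by simp
      next
        case False then have "u = n - 1" "u + 1 = n" using \<open>u<n\<close> by auto
        then have "v = 0" using \<open>v = _\<close> by simp
        then show ?thesis using assms(1) \<open>u+1=n\<close> by presburger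
      qed
    qed
    show ?thesis using e unfolding cycle_adj_def using key[of "xs!i" "xs!Suc i"] key[of "xs!Suc i" "xs!i"]
      by (auto simp: add.commute)
  qed
  moreover have "even (xs!0 + xs!i + i)" using Suc by simp
  ultimately show ?case by presburger
qed

lemma local6:
  fixes p0 p1 p2 p3 p4 p5 :: nat
  assumes r: "p0 \<in> {1,2,3}" "p1 \<in> {1,2,3}" "p2 \<in> {1,2,3}" "p3 \<in> {1,2,3}" "p4 \<in> {1,2,3}" "p5 \<in> {1,2,3}"
  and "p0 = p1 \<Longrightarrow> p0 < 1" "p1 = p2 \<Longrightarrow> p1 < 1" "p2 = p3 \<Longrightarrow> p2 < 1" "p3 = p4 \<Longrightarrow> p3 < 1" "p4 = p5 \<Longrightarrow> p4 < 1"
  and "p0 = p2 \<Longrightarrow> p0 < 2" "p1 = p3 \<Longrightarrow> p1 < 2" "p2 = p4 \<Longrightarrow> p2 < 2" "p3 = p5 \<Longrightarrow> p3 < 2"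
  and "p0 = p3 \<Longrightarrow> p0 < 3" "p1 = p4 \<Longrightarrow> p1 < 3" "p2 = p5 \<Longrightarrow> p2 < 3"
  shows "p2 = 1 \<or> p3 = 1"
  using assms by auto

theorem mainTheorem9:
  fixes n a b k :: nat
  assumes "n \<ge> 4" and "a < n" and "b < n"
    and "gdist (cycle_adj n) a b = 2 * k + 1"
  shows "packing_chromatic {0..<n + 2} (two_pendant_adj n a b) \<ge> 4"
proof (rule ccontr)
  define V where "V = {0..<n + 2}"
  define E where "E = two_pendant_adj n a b"
  assume "\<not> packing_chromatic {0..<n + 2} (two_pendant_adj n a b) \<ge> 4"
  then have lt: "(LEAST k. \<exists>c. packing_coloring V E k c) < 4"
    unfolding packing_chromatic_def V_def E_def by simp
  have ex: "\<exists>c. packing_coloring V E (n+2) c"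
    by (rule exI[of _ "\<lambda>v. v + 1"]) (auto simp: packing_coloring_def V_def)
  obtain c where pc0: "packing_coloring V E (LEAST k. \<exists>c. packing_coloring V E k c) c"
    using LeastI_ex[of "\<lambda>k. \<exists>c. packing_coloring V E k c"] ex by blast
  have pc: "packing_coloring V E 3 c"
    using pc0 lt unfolding packing_coloring_def by force
  have n0: "n > 0" using assms(1) by simp
  have cycE: "\<And>u v. cycle_adj n u v \<Longrightarrow> E u v" unfolding E_def two_pendant_adj_def by simp
  define P where "P x = c (x mod n)" for x
  have inV: "x mod n \<in> V" for x
  proof -
    have "x mod n < n" using n0 by simp
    then show ?thesis by (simp add: V_def)
  qed
  have Pr: "P x \<in> {1,2,3}" for x using pc inV[of x] unfolding packing_coloring_def P_def by auto
  have Pd: "P x < d" if "1 \<le> d" "d \<le> 3" "P x = P (x+d)" for x d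
  proof -
    obtain xs where xs: "walk (cycle_adj n) xs" "hd xs = x mod n" "last xs = (x+d) mod n" "length xs = Suc d"
      using cyc_seg[OF n0, of x d] by blast
    have "gdist E (x mod n) ((x+d) mod n) \<le> d"
      using gdist_le[OF walk_mono[OF xs(1) cycE] xs(2-4)] .
    moreover have "x mod n \<noteq> (x+d) mod n" using mod_ne[of d n x] that assms(1) by simp
    ultimately show ?thesis using pc_conf[OF pc inV inV] that(3) unfolding P_def by blast
  qed
  have notboth: "P (x+2) = 1 \<or> P (x+3) = 1" for x
    apply (rule local6[of "P x" "P (x+1)" _ _ "P (x+4)" "P (x+5)"])
    using Pr Pd[of 1] Pd[of 2] Pd[of 3] by (simp_all add: add.assoc numeral_eq_Suc)
  have Pper: "P (x + n) = P x" for x unfolding P_def by simp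
  have alt: "P (y+1) = 1 \<longleftrightarrow> P y \<noteq> 1" for y
  proof
    assume "P (y+1) = 1" then show "P y \<noteq> 1" using Pd[of 1 y] by auto
  next
    assume h: "P y \<noteq> 1"
    have "P (y + n - 2 + 2) = P y" "P (y + n - 2 + 3) = P (y+1)"
    proof -
      have "y + n - 2 + 2 = y + n" "y + n - 2 + 3 = (y + 1) + n" using assms(1) by simp_all
      then show "P (y + n - 2 + 2) = P y" "P (y + n - 2 + 3) = P (y+1)" using Pper[of y] Pper[of "y+1"] by simp_all
    qed
    then show "P (y+1) = 1" using notboth[of "y + n - 2"] h by simp
  qed
  have fx: "P x = 1 \<longleftrightarrow> (P 0 = 1 \<longleftrightarrow> even x)" for x
    by (induction x) (use alt in auto)
  have evn: "even n" using fx[of n] Pper[of 0] by auto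
  have pend: "c v \<noteq> 1" if v: "v < n" and w: "w \<in> V" "w \<ge> n" "E w v" for v w
  proof
    assume cv: "c v = 1"
    define x where "x = v + n - 1"
    have Px1: "P (x+1) = c v" unfolding P_def x_def using v by simp
    have "P x \<noteq> 1" "P (x+2) \<noteq> 1" using alt[of x] alt[of "x+1"] Px1 cv by auto
    have wn: "w \<noteq> x mod n" "w \<noteq> (x+1) mod n" "w \<noteq> (x+2) mod n"
      using w(2) mod_less_divisor[OF n0, of x] mod_less_divisor[OF n0, of "x+1"] mod_less_divisor[OF n0, of "x+2"]
      by linarith+
    have "gdist E w ((x+1) mod n) \<le> 1"
      by (rule gdist_le[of _ "[w, (x+1) mod n]"]) (use w Px1 v in \<open>auto simp: walk_def x_def\<close>)
    then have c1: "c w \<noteq> 1" using pc_conf[OF pc w(1) inV wn(2)] Px1 cv unfolding P_def by fastforce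
    have cyc1: "cycle_adj n ((x+1) mod n) (x mod n)" "cycle_adj n ((x+1) mod n) ((x+2) mod n)"
      using n0 by (auto simp: cycle_adj_def mod_Suc_eq)
    have "gdist E w (x mod n) \<le> 2"
      by (rule gdist_le[of _ "[w, (x+1) mod n, x mod n]"])
        (use w Px1 v cycE[OF cyc1(1)] in \<open>auto simp: walk_def x_def nth_Cons split: nat.splits\<close>)
    then have c2: "c w \<noteq> P x \<or> P x < 2" using pc_conf[OF pc w(1) inV wn(1)] unfolding P_def by fastforce
    have "gdist E w ((x+2) mod n) \<le> 2"
      by (rule gdist_le[of _ "[w, (x+1) mod n, (x+2) mod n]"])
        (use w Px1 v cycE[OF cyc1(2)] in \<open>auto simp: walk_def x_def nth_Cons split: nat.splits\<close>)
    then have c3: "c w \<noteq> P (x+2) \<or> P (x+2) < 2" using pc_conf[OF pc w(1) inV wn(3)] unfolding P_def by fastforce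
    have "P x \<noteq> P (x+2)" using Pd[of 2 x] \<open>P x \<noteq> 1\<close> Pr[of x] by auto
    moreover have "c w \<in> {1,2,3}" using pc w(1) unfolding packing_coloring_def by auto
    ultimately show False using c1 c2 c3 Pr[of x] Pr[of "x+2"] \<open>P x \<noteq> 1\<close> \<open>P (x+2) \<noteq> 1\<close> by auto
  qed
  have ca: "c a \<noteq> 1" by (rule pend[of a n]) (use assms(2) in \<open>auto simp: V_def E_def two_pendant_adj_def\<close>)
  have cb: "c b \<noteq> 1" by (rule pend[of b "n+1"]) (use assms(3) in \<open>auto simp: V_def E_def two_pendant_adj_def\<close>)
  have "P a = c a" "P b = c b" unfolding P_def using assms(2,3) by simp_all
  then have same: "even a = even b" using fx[of a] fx[of b] ca cb by auto
  have exw: "\<exists>m xs. walk (cycle_adj n) xs \<and> hd xs = a \<and> last xs = b \<and> length xs = Suc m"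
  proof -
    have "(a + (b + n - a) mod n) mod n = (a + (b + n - a)) mod n" by (simp add: mod_add_right_eq)
    also have "a + (b + n - a) = b + n" using assms(2) by simp
    finally have "(a + (b + n - a) mod n) mod n = b" using assms(3) by simp
    moreover have "a mod n = a" using assms(2) by simp
    ultimately show ?thesis using cyc_seg[OF n0, of a "(b + n - a) mod n"] by metis
  qed
  then have "\<exists>xs. walk (cycle_adj n) xs \<and> hd xs = a \<and> last xs = b \<and> length xs = Suc (gdist (cycle_adj n) a b)"
    unfolding gdist_def by (rule LeastI_ex)
  then obtain xs where xs: "walk (cycle_adj n) xs" "hd xs = a" "last xs = b" "length xs = Suc (2*k+1)"
    using assms(4) by metis
  have "even (xs!0 + xs!(2*k+1) + (2*k+1))" using cyc_parity[OF evn xs(1), of "2*k+1"] xs(4) by simp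
  moreover have "xs!0 = a" using xs(2,4) hd_conv_nth[of xs] by fastforce
  moreover have "xs!(2*k+1) = b"
  proof -
    have "xs \<noteq> []" using xs(4) by auto
    then have "last xs = xs ! (length xs - 1)" by (rule last_conv_nth)
    then show ?thesis using xs(3,4) by simp
  qed
  ultimately have "even (a + b + (2*k+1))" by simp
  then show False using same by presburger
qed

end
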